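(* Let $m=2k+1$ with $k$ a positive integer, let $n$ be a positive integer, and let $\{B_1,\dots,B_{k(n-1)+1}\}$ be a basis for $\Gamma_{k,n}$. For $i\in[n]$ let $\vec d_i$ be the $n$-dimensional row vector with $\frac12$ in the $i$-th and $(n-i+1)$-th entries and $0$ elsewhere, and let $C_i$ be the $k\times n$ $(0,1)$-matrix whose $i$-th column is all $1$'s and other entries $0$. For $1\le i\le \lceil n/2\rceil-1$ define the $m\times n$ matrix $\tilde C_i=\begin{pmatrix} C_i\\ \vec d_i\\ C_i^\pi\end{pmatrix}$. If $n$ is even, define $\tilde B_i=\begin{pmatrix} B_i\\ \vec d_{n/2}\\ B_i^\pi\end{pmatrix}$; if $n$ is odd, define $\tilde B_i=\begin{pmatrix} B_i\\ \vec e_{\lceil n/2\rceil}\\ B_i^\pi\end{pmatrix}$, where $\vec e_{\lceil n/2\rceil}$ is the $n$-dimensional unit row vector with $1$ in entry $\lceil n/2\rceil$. Then $\{\tilde B_1,\dots,\tilde B_{k(n-1)+1},\tilde C_1,\dots,\tilde C_{\lceil n/2\rceil-1}\}$ is a basis for $\Gamma^\pi_{m,n}$.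
   Context: A real matrix is stochastic if its entries are nonnegative and each row sums to $1$. $\Gamma_{k,n}$ is the set of $k\times n$ stochastic matrices. For $A=(a_{i,j})\in M_{p,n}$, $A^\pi$ is the $p\times n$ matrix with $(A^\pi)_{i,j}=a_{p+1-i,n+1-j}$; $A$ is centrosymmetric if $A=A^\pi$. $\Gamma^\pi_{m,n}$ is the set of $m\times n$ centrosymmetric stochastic matrices; for $m=2k+1$ it is an affine set of dimension $k(n-1)+\lceil n/2\rceil-1$. A basis for such a set $\Gamma$ of affine dimension $d$ means a set of $d+1$ linearly independent elements of $\Gamma$ whose linear span contains $\Gamma$. Block notation $\begin{pmatrix}X\\ \vec v\\ Y\end{pmatrix}$ means the $k\times n$ matrix $X$, then the row $\vec v$, then the $k\times n$ matrix $Y$, stacked vertically. *)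

theory Defs
  imports Complex_Main
begin

text \<open>A real p x n matrix is modelled as a function nat => nat => real with 0-based
indices (row i < p, column j < n) that vanishes outside the box.\<close>

type_synonym rmat = "nat \<Rightarrow> nat \<Rightarrow> real"

definition is_mat :: "nat \<Rightarrow> nat \<Rightarrow> rmat \<Rightarrow> bool" where
  "is_mat p n A \<longleftrightarrow> (\<forall>i j. (p \<le> i \<or> n \<le> j) \<longrightarrow> A i j = 0)"

definition stochastic :: "nat \<Rightarrow> nat \<Rightarrow> rmat \<Rightarrow> bool" where
  "stochastic p n A \<longleftrightarrow> is_mat p n A \<and> (\<forall>i<p. \<forall>j<n. 0 \<le> A i j)
      \<and> (\<forall>i<p. (\<Sum>j<n. A i j) = 1)"

definition Gamma :: "nat \<Rightarrow> nat \<Rightarrow> rmat set" where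
  "Gamma p n = {A. stochastic p n A}"

text \<open>A^pi (entry (i,j) is a_{p+1-i,n+1-j} in 1-based indexing).\<close>
definition flip :: "nat \<Rightarrow> nat \<Rightarrow> rmat \<Rightarrow> rmat" where
  "flip p n A = (\<lambda>i j. if i < p \<and> j < n then A (p - 1 - i) (n - 1 - j) else 0)"

definition Gamma_pi :: "nat \<Rightarrow> nat \<Rightarrow> rmat set" where
  "Gamma_pi p n = {A. stochastic p n A \<and> flip p n A = A}"

definition lincomb :: "nat \<Rightarrow> (nat \<Rightarrow> real) \<Rightarrow> (nat \<Rightarrow> rmat) \<Rightarrow> rmat" where
  "lincomb N c F = (\<lambda>i j. \<Sum>l<N. c l * F l i j)"

definition lin_indep :: "nat \<Rightarrow> (nat \<Rightarrow> rmat) \<Rightarrow> bool" where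
  "lin_indep N F \<longleftrightarrow> (\<forall>c. lincomb N c F = (\<lambda>i j. 0) \<longrightarrow> (\<forall>l<N. c l = 0))"

text \<open>For S an affine
  set of affine dimension d this is used with N = d + 1.\<close>
definition is_basis :: "rmat set \<Rightarrow> nat \<Rightarrow> (nat \<Rightarrow> rmat) \<Rightarrow> bool" where
  "is_basis S N F \<longleftrightarrow> (\<forall>l<N. F l \<in> S) \<and> lin_indep N F
      \<and> (\<forall>A\<in>S. \<exists>c. A = lincomb N c F)"

text \<open>Row vector d_i (1-based i): 1/2 in entries i and n-i+1, 0 elsewhere (0-based columns).\<close>
definition dvec :: "nat \<Rightarrow> nat \<Rightarrow> nat \<Rightarrow> real" where
  "dvec n i = (\<lambda>j. if j < n \<and> (j = i - 1 \<or> j = n - i) then 1/2 else 0)"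

definition evec :: "nat \<Rightarrow> nat \<Rightarrow> nat \<Rightarrow> real" where
  "evec n i = (\<lambda>j. if j < n \<and> j = i - 1 then 1 else 0)"

definition Cmat :: "nat \<Rightarrow> nat \<Rightarrow> nat \<Rightarrow> rmat" where
  "Cmat k n i = (\<lambda>r j. if r < k \<and> j < n \<and> j = i - 1 then 1 else 0)"

definition stack :: "nat \<Rightarrow> nat \<Rightarrow> rmat \<Rightarrow> (nat \<Rightarrow> real) \<Rightarrow> rmat \<Rightarrow> rmat" where
  "stack k n X v Y = (\<lambda>r j. if j < n then
      (if r < k then X r j else if r = k then v j else if r < 2*k+1 then Y (r - k - 1) j else 0)
     else 0)"

definition half_up :: "nat \<Rightarrow> nat" where
  "half_up n = (n + 1) div 2"

definition Ctilde :: "nat \<Rightarrow> nat \<Rightarrow> nat \<Rightarrow> rmat" where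
  "Ctilde k n i = stack k n (Cmat k n i) (dvec n i) (flip k n (Cmat k n i))"

definition Btilde :: "nat \<Rightarrow> nat \<Rightarrow> rmat \<Rightarrow> rmat" where
  "Btilde k n B = stack k n B (if even n then dvec n (n div 2) else evec n (half_up n))
                     (flip k n B)"

definition new_family :: "nat \<Rightarrow> nat \<Rightarrow> (nat \<Rightarrow> rmat) \<Rightarrow> nat \<Rightarrow> rmat" where
  "new_family k n B l = (if l < k * (n - 1) + 1 then Btilde k n (B l)
                         else Ctilde k n (l - (k * (n - 1) + 1) + 1))"

end

theory Submission
  imports Defs
begin

lemma flip_row_sum:
  assumes "r < k"
  shows "(\<Sum>j<n. flip k n X r j) = (\<Sum>j<n. X (k - 1 - r) j)"
proof -
  have "(\<Sum>j<n. flip k n X r j) = (\<Sum>j<n. X (k - 1 - r) (n - Suc j))"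
    using assms by (intro sum.cong) (auto simp: flip_def)
  also have "\<dots> = (\<Sum>j<n. X (k - 1 - r) j)"
    by (rule sum.nat_diff_reindex)
  finally show ?thesis .
qed

lemma stack_Gamma_pi:
  assumes X: "stochastic k n X" and sym: "\<forall>j<n. v (n-1-j) = v j"
    and nn: "\<forall>j<n. 0 \<le> v j" and s: "(\<Sum>j<n. v j) = 1"
  shows "stack k n X v (flip k n X) \<in> Gamma_pi (2*k+1) n"
proof -
  let ?S = "stack k n X v (flip k n X)"
  have im: "is_mat (2*k+1) n ?S" by (auto simp: is_mat_def stack_def)
  have pos: "\<forall>i<2*k+1. \<forall>j<n. 0 \<le> ?S i j"
    using X nn by (auto simp: stack_def flip_def stochastic_def)
  have rs: "(\<Sum>j<n. ?S i j) = 1" if "i < 2*k+1" for i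
  proof -
    consider "i < k" | "i = k" | "k < i" by linarith
    then show ?thesis
    proof cases
      case 1 then show ?thesis using X by (simp add: stack_def stochastic_def)
    next
      case 2 then show ?thesis using s by (simp add: stack_def)
    next
      case 3
      have "(\<Sum>j<n. ?S i j) = (\<Sum>j<n. flip k n X (i - k - 1) j)"
        using 3 that by (intro sum.cong) (auto simp: stack_def)
      also have "\<dots> = (\<Sum>j<n. X (k - 1 - (i - k - 1)) j)"
        using 3 that by (intro flip_row_sum) auto
      also have "\<dots> = 1" using X 3 that by (auto simp: stochastic_def)
      finally show ?thesis .
    qed
  qed
  have fl: "flip (2*k+1) n ?S = ?S"
  proof (intro ext)
    fix i j
    show "flip (2*k+1) n ?S i j = ?S i j"
    proof (cases "i < 2*k+1 \<and> j < n")
      case False then show ?thesis by (auto simp: flip_def stack_def)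
    next
      case True
      consider "i < k" | "i = k" | "k < i" by linarith
      then show ?thesis
      proof cases
        case 1 then show ?thesis using True X
          by (auto simp: flip_def stack_def stochastic_def is_mat_def)
      next
        case 2 then show ?thesis using True sym by (auto simp: flip_def stack_def)
      next
        case 3 then show ?thesis using True X
          by (auto simp: flip_def stack_def stochastic_def is_mat_def mult_2)
      qed
    qed
  qed
  show ?thesis using im pos rs fl by (auto simp: Gamma_pi_def stochastic_def)
qed


definition midv :: "nat \<Rightarrow> nat \<Rightarrow> real" where
  "midv n = (if even n then dvec n (n div 2) else evec n (half_up n))"

definition Xf :: "nat \<Rightarrow> nat \<Rightarrow> (nat \<Rightarrow> rmat) \<Rightarrow> nat \<Rightarrow> rmat" where
  "Xf k n B l = (if l < k*(n-1)+1 then B l else Cmat k n (l - (k*(n-1)+1) + 1))"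

definition vf :: "nat \<Rightarrow> nat \<Rightarrow> nat \<Rightarrow> nat \<Rightarrow> real" where
  "vf k n l = (if l < k*(n-1)+1 then midv n else dvec n (l - (k*(n-1)+1) + 1))"

lemma fam_stack: "new_family k n B l = stack k n (Xf k n B l) (vf k n l) (flip k n (Xf k n B l))"
  by (simp add: new_family_def Xf_def vf_def midv_def Btilde_def Ctilde_def)

lemma lincomb_stack:
  "lincomb M c (\<lambda>l. stack k n (X l) (v l) (flip k n (X l)))
   = stack k n (lincomb M c X) (\<lambda>j. \<Sum>l<M. c l * v l j) (flip k n (lincomb M c X))"
proof (intro ext)
  fix r j
  consider "\<not> j < n" | "j < n" "r < k" | "j < n" "r = k" | "j < n" "k < r" "r < 2*k+1"
    | "j < n" "2*k+1 \<le> r" by linarith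
  then show "lincomb M c (\<lambda>l. stack k n (X l) (v l) (flip k n (X l))) r j
   = stack k n (lincomb M c X) (\<lambda>j. \<Sum>l<M. c l * v l j) (flip k n (lincomb M c X)) r j"
    by cases (auto simp: lincomb_def stack_def flip_def)
qed

lemma stack_zero_top: "stack k n X v Y = (\<lambda>i j. 0) \<Longrightarrow> r < k \<Longrightarrow> j < n \<Longrightarrow> X r j = 0"
  by (drule fun_cong[of _ _ r], drule fun_cong[of _ _ j]) (simp add: stack_def)

lemma stack_zero_mid: "stack k n X v Y = (\<lambda>i j. 0) \<Longrightarrow> j < n \<Longrightarrow> v j = 0"
  by (drule fun_cong[of _ _ k], drule fun_cong[of _ _ j]) (simp add: stack_def)

lemma dvec_sum:
  assumes "1 \<le> i" "2 * i \<le> n"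
  shows "(\<Sum>j<n. dvec n i j) = 1"
proof -
  have "(\<Sum>j<n. dvec n i j) = (\<Sum>j\<in>{i-1, n-i}. dvec n i j)"
    using assms by (intro sum.mono_neutral_right) (auto simp: dvec_def)
  also have "\<dots> = 1" using assms by (simp add: dvec_def)
  finally show ?thesis .
qed

lemma dvec_sym: "1 \<le> i \<Longrightarrow> i \<le> n \<Longrightarrow> j < n \<Longrightarrow> dvec n i (n - 1 - j) = dvec n i j"
  by (auto simp: dvec_def)

lemma dvec_nn: "0 \<le> dvec n i j" by (simp add: dvec_def)

lemma midv_props:
  assumes "0 < n"
  shows "\<forall>j<n. midv n (n-1-j) = midv n j" "\<forall>j<n. 0 \<le> midv n j" "(\<Sum>j<n. midv n j) = 1"
proof -
  show "\<forall>j<n. midv n (n-1-j) = midv n j"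
  proof (cases "even n")
    case True
    have "1 \<le> n div 2" using True assms by (auto elim: evenE)
    then show ?thesis using True dvec_sym[of "n div 2" n] by (simp add: midv_def)
  next
    case False
    then obtain q where q: "n = 2*q+1" by (auto elim: oddE)
    show ?thesis using False by (auto simp: midv_def evec_def half_up_def q)
  qed
  show "\<forall>j<n. 0 \<le> midv n j" by (auto simp: midv_def evec_def dvec_def)
  show "(\<Sum>j<n. midv n j) = 1"
  proof (cases "even n")
    case True then show ?thesis using assms by (auto simp: midv_def intro!: dvec_sum)
  next
    case False
    then obtain q where q: "n = 2*q+1" by (auto elim: oddE)
    have "(\<Sum>j<n. midv n j) = (\<Sum>j\<in>{q}. midv n j)"
      using False by (intro sum.mono_neutral_right) (auto simp: midv_def evec_def half_up_def q)
    also have "\<dots> = 1" using False by (simp add: midv_def evec_def half_up_def q)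
    finally show ?thesis .
  qed
qed

lemma Cmat_stoch: "1 \<le> i \<Longrightarrow> i \<le> n \<Longrightarrow> stochastic k n (Cmat k n i)"
proof -
  assume a: "1 \<le> i" "i \<le> n"
  have "(\<Sum>j<n. Cmat k n i r j) = 1" if "r < k" for r
  proof -
    have "(\<Sum>j<n. Cmat k n i r j) = (\<Sum>j\<in>{i-1}. Cmat k n i r j)"
      using a by (intro sum.mono_neutral_right) (auto simp: Cmat_def)
    then show ?thesis using a that by (simp add: Cmat_def)
  qed
  then show ?thesis by (auto simp: stochastic_def is_mat_def Cmat_def)
qed


lemma dfam:
  assumes "0 < n" "j < n"
  shows "(\<Sum>l\<in>{N..<N+(half_up n - 1)}. c l * dvec n (l-N+1) j)
    = (if j < half_up n - 1 then c (N+j) / 2 else if n - half_up n < j then c (N+(n-1-j)) / 2 else 0)"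
proof -
  define h where "h = half_up n"
  have h2: "2*h \<le> n+1" "1 \<le> h" using assms by (auto simp: h_def half_up_def)
  have "(\<Sum>l\<in>{N..<N+(h - 1)}. c l * dvec n (l-N+1) j) = (\<Sum>i<h-1. c (N+i) * dvec n (i+1) j)"
    by (simp add: sum.atLeastLessThan_shift_0 atLeast0LessThan)
  also have "\<dots> = (if j < h - 1 then c (N+j) / 2 else if n - h < j then c (N+(n-1-j)) / 2 else 0)"
  proof -
    have dv: "dvec n (Suc i) j = (if j = i \<or> j = n-1-i then 1/2 else 0)" if "i < h - 1" for i
      using assms that h2 by (auto simp: dvec_def)
    consider "j < h - 1" | "n - h < j" | "\<not> j < h - 1" "\<not> n - h < j" by linarith
    then show ?thesis
    proof cases
      case 1
      have "(\<Sum>i<h-1. c (N+i) * dvec n (i+1) j) = (\<Sum>i<h-1. if i = j then c (N+i) / 2 else 0)"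
        using 1 h2 assms by (intro sum.cong) (auto simp: dv)
      then show ?thesis using 1 by simp
    next
      case 2
      have "(\<Sum>i<h-1. c (N+i) * dvec n (i+1) j) = (\<Sum>i<h-1. if i = n-1-j then c (N+i) / 2 else 0)"
        using 2 h2 assms by (intro sum.cong) (auto simp: dv)
      moreover have "\<not> j < h - 1" "n-1-j < h-1" using 2 h2 assms by auto
      ultimately show ?thesis using 2 by simp
    next
      case 3
      have "(\<Sum>i<h-1. c (N+i) * dvec n (i+1) j) = (\<Sum>i<h-1. 0)"
        using 3 h2 assms by (intro sum.cong) (auto simp: dv)
      then show ?thesis using 3 by simp
    qed
  qed
  finally show ?thesis by (simp add: h_def)
qed


lemma coef_sum:
  assumes "\<forall>l<N. B l \<in> Gamma k n" "0 < k"
  shows "(\<Sum>j<n. lincomb N c B 0 j) = (\<Sum>l<N. c l)"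
proof -
  have "(\<Sum>j<n. lincomb N c B 0 j) = (\<Sum>l<N. c l * (\<Sum>j<n. B l 0 j))"
    by (simp add: lincomb_def sum_distrib_left sum.swap[of _ "{..<n}"])
  also have "\<dots> = (\<Sum>l<N. c l)"
    using assms by (intro sum.cong) (auto simp: Gamma_def stochastic_def)
  finally show ?thesis .
qed

lemma span_rows:
  assumes k: "0 < k" and n: "0 < n"
    and sp: "\<forall>A\<in>Gamma k n. \<exists>c. A = lincomb N c B" and Bm: "\<forall>l<N. B l \<in> Gamma k n"
    and Ym: "is_mat k n Y" and Yr: "\<forall>r<k. (\<Sum>j<n. Y r j) = s"
  shows "\<exists>c. Y = lincomb N c B \<and> (\<Sum>l<N. c l) = s"
proof -
  define T where "T = (\<Sum>r<k. \<Sum>j<n. \<bar>Y r j\<bar>)"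
  define t where "t = real n * T + \<bar>s\<bar> + 1"
  have Ybd: "\<bar>Y r j\<bar> \<le> T" if "r < k" "j < n" for r j
  proof -
    have "\<bar>Y r j\<bar> \<le> (\<Sum>j<n. \<bar>Y r j\<bar>)"
      using that by (intro member_le_sum) auto
    also have "\<dots> \<le> T" unfolding T_def
      using that by (intro member_le_sum[of r "{..<k}" "\<lambda>r. \<Sum>j<n. \<bar>Y r j\<bar>"]) (auto intro: sum_nonneg)
    finally show ?thesis .
  qed
  have T0: "0 \<le> T" unfolding T_def by (intro sum_nonneg) auto
  have tT: "T \<le> t / real n"
  proof -
    have "real n * T \<le> t" using T0 by (simp add: t_def)
    then show ?thesis using n by (simp add: field_simps)
  qed
  have st: "0 < s + t" unfolding t_def using T0 n by (smt (verit) mult_nonneg_nonneg of_nat_0_le_iff)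
  define J where "J = (\<lambda>r j. if r < k \<and> j < n then 1 / real n else (0::real))"
  have Jr: "(\<Sum>j<n. J r j) = 1" if "r < k" for r using that n by (simp add: J_def)
  have JG: "J \<in> Gamma k n" using Jr by (auto simp: Gamma_def stochastic_def is_mat_def J_def)
  define P where "P = (\<lambda>r j. (Y r j + t * J r j) / (s + t))"
  have PG: "P \<in> Gamma k n"
  proof -
    have "is_mat k n P" using Ym by (auto simp: is_mat_def P_def J_def)
    moreover have "0 \<le> P r j" if "r < k" "j < n" for r j
    proof -
      have "t * J r j = t / real n" using that by (simp add: J_def)
      moreover have "\<bar>Y r j\<bar> \<le> t / real n" using Ybd[OF that] tT by linarith
      ultimately have "0 \<le> Y r j + t * J r j" by linarith
      then show ?thesis using st by (simp add: P_def)
    qed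
    moreover have "(\<Sum>j<n. P r j) = 1" if "r < k" for r
    proof -
      have "(\<Sum>j<n. P r j) = ((\<Sum>j<n. Y r j) + t * (\<Sum>j<n. J r j)) / (s + t)"
        by (simp add: P_def sum_divide_distrib[symmetric] sum.distrib sum_distrib_left)
      also have "\<dots> = 1" using Yr that Jr[OF that] st by simp
      finally show ?thesis .
    qed
    ultimately show ?thesis by (auto simp: Gamma_def stochastic_def)
  qed
  obtain c1 where c1: "P = lincomb N c1 B" using sp PG by blast
  obtain c2 where c2: "J = lincomb N c2 B" using sp JG by blast
  define c where "c = (\<lambda>l. (s + t) * c1 l - t * c2 l)"
  have Yeq: "Y = lincomb N c B"
  proof (intro ext)
    fix r j
    have "Y r j = (s + t) * P r j - t * J r j" using st by (simp add: P_def)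
    also have "\<dots> = lincomb N c B r j"
      unfolding c1 c2 by (simp add: lincomb_def c_def sum_distrib_left sum_subtractf[symmetric] algebra_simps)
    finally show "Y r j = lincomb N c B r j" .
  qed
  have "(\<Sum>l<N. c l) = (\<Sum>j<n. lincomb N c B 0 j)" using coef_sum[OF Bm k] by simp
  also have "\<dots> = s" using Yeq Yr k by simp
  finally show ?thesis using Yeq by blast
qed


lemma split_sum: "(N::nat) \<le> M \<Longrightarrow> (\<Sum>l<M. f l) = (\<Sum>l<N. f l) + (\<Sum>l\<in>{N..<M}. f l)"
proof -
  assume "N \<le> M"
  then have "{..<M} = {..<N} \<union> {N..<M}" by auto
  then show ?thesis by (simp add: sum.union_disjoint[symmetric] ivl_disj_int)
qed

lemma mid_decomp:
  assumes n: "0 < n" and sym: "\<forall>j<n. v (n-1-j) = v j" and vs: "(\<Sum>j<n. v j) = 1"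
    and j: "j < n" "half_up n - 1 \<le> j" "j \<le> n - half_up n"
  shows "v j = (1 - (\<Sum>i\<in>{0..<half_up n - 1}. 2 * v i)) * midv n j"
proof -
  define h where "h = half_up n"
  have h2: "2*h \<le> n+1" "1 \<le> h" using n by (auto simp: h_def half_up_def)
  define D where "D = (\<lambda>j. \<Sum>l\<in>{0..<0+(h-1)}. (2 * v l) * dvec n (l-0+1) j)"
  have Dj: "D j' = (if j' < h - 1 then v j' else if n - h < j' then v (n-1-j') else 0)" if "j' < n" for j'
    using dfam[OF n that, where N=0 and c="\<lambda>l. 2 * v l"] unfolding D_def h_def by simp
  have SD: "(\<Sum>j<n. D j) = (\<Sum>i\<in>{0..<h-1}. 2 * v i)"
  proof -
    have "(\<Sum>j<n. D j) = (\<Sum>l\<in>{0..<h-1}. 2 * v l * (\<Sum>j<n. dvec n (l+1) j))"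
      by (simp add: D_def sum_distrib_left sum.swap[of _ "{..<n}"])
    also have "\<dots> = (\<Sum>l\<in>{0..<h-1}. 2 * v l)"
      using h2 by (intro sum.cong refl) (simp add: dvec_sum)
    finally show ?thesis .
  qed
  define u where "u = (\<lambda>j. v j - D j)"
  have Su: "(\<Sum>j<n. u j) = 1 - (\<Sum>i\<in>{0..<h-1}. 2 * v i)"
    by (simp add: u_def sum_subtractf vs SD)
  have u0: "u j' = 0" if "j' < n" "j' < h - 1 \<or> n - h < j'" for j'
    using that sym Dj[OF that(1)] by (auto simp: u_def)
  have um: "u j' = v j'" if "j' < n" "h - 1 \<le> j'" "j' \<le> n - h" for j'
    using that Dj[OF that(1)] by (auto simp: u_def)
  show ?thesis
  proof (cases "even n")
    case True
    then obtain q where q: "n = 2*q" by (auto elim: evenE)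
    have hq: "h = q" using q by (simp add: h_def half_up_def)
    have q1: "1 \<le> q" using q n by simp
    have "(\<Sum>j<n. u j) = (\<Sum>j\<in>{q-1, q}. u j)"
      using q1 hq q by (intro sum.mono_neutral_right) (auto intro!: u0)
    also have "\<dots> = v (q-1) + v q" using q1 hq q by (simp add: um)
    also have "v q = v (q - 1)" using sym[rule_format, of "q-1"] q q1 by (simp add: Suc_diff_le)
    finally have e: "(\<Sum>j<n. u j) = 2 * v (q-1)" by simp
    have jj: "j = q - 1 \<or> j = q" using j hq q unfolding h_def[symmetric] by auto
    have vj: "v j = v (q-1)" using jj sym[rule_format, of "q-1"] q q1 by (auto simp: Suc_diff_le)
    have "midv n j = 1/2" using jj True q q1 by (auto simp: midv_def dvec_def)
    then show ?thesis using e Su vj unfolding h_def by simp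
  next
    case False
    then obtain q where q: "n = 2*q+1" by (auto elim: oddE)
    have hq: "h = q + 1" using q by (simp add: h_def half_up_def)
    have "(\<Sum>j<n. u j) = (\<Sum>j\<in>{q}. u j)"
      using hq q by (intro sum.mono_neutral_right) (auto intro!: u0)
    also have "\<dots> = v q" using hq q by (simp add: um)
    finally have e: "(\<Sum>j<n. u j) = v q" .
    have jj: "j = q" using j hq q unfolding h_def[symmetric] by auto
    have "midv n j = 1" using jj False q by (auto simp: midv_def evec_def half_up_def)
    then show ?thesis using e Su jj unfolding h_def by simp
  qed
qed


lemma midv_zero: "0 < n \<Longrightarrow> j < half_up n - 1 \<or> n - half_up n < j \<Longrightarrow> midv n j = 0"
  by (cases "even n") (auto simp: midv_def dvec_def evec_def half_up_def elim!: evenE oddE)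

theorem mainTheorem10:
  fixes k n :: nat and B :: "nat \<Rightarrow> rmat"
  assumes "0 < k" and "0 < n"
    and "is_basis (Gamma k n) (k * (n - 1) + 1) B"
  shows "is_basis (Gamma_pi (2 * k + 1) n) (k * (n - 1) + 1 + (half_up n - 1)) (new_family k n B)"
proof -
  define N where "N = k * (n - 1) + 1"
  define h where "h = half_up n"
  define M where "M = N + (h - 1)"
  have k: "0 < k" and n: "0 < n" using assms by auto
  have Bm: "\<forall>l<N. B l \<in> Gamma k n" and Bi: "lin_indep N B"
    and Bs: "\<forall>A\<in>Gamma k n. \<exists>c. A = lincomb N c B"
    using assms(3) by (auto simp: is_basis_def N_def)
  have h2: "2*h \<le> n+1" "1 \<le> h" using n by (auto simp: h_def half_up_def)
  have NM: "N \<le> M" by (simp add: M_def)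
  have famF: "new_family k n B = (\<lambda>l. stack k n (Xf k n B l) (vf k n l) (flip k n (Xf k n B l)))"
    by (rule ext, rule fam_stack)
  have XfB: "Xf k n B l = B l" if "l < N" for l using that by (simp add: Xf_def N_def)
  have XfC: "Xf k n B l = Cmat k n (l - N + 1)" if "\<not> l < N" for l using that by (simp add: Xf_def N_def)
  have vfB: "vf k n l = midv n" if "l < N" for l using that by (simp add: vf_def N_def)
  have vfC: "vf k n l = dvec n (l - N + 1)" if "\<not> l < N" for l using that by (simp add: vf_def N_def)
  have mem: "\<forall>l<M. new_family k n B l \<in> Gamma_pi (2*k+1) n"
  proof (intro allI impI)
    fix l assume l: "l < M"
    show "new_family k n B l \<in> Gamma_pi (2*k+1) n"
    proof (cases "l < N")
      case True
      have "stochastic k n (B l)" using Bm True by (auto simp: Gamma_def)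
      then show ?thesis unfolding fam_stack XfB[OF True] vfB[OF True]
        using midv_props[OF n] by (intro stack_Gamma_pi) auto
    next
      case False
      define i where "i = l - N + 1"
      have i: "1 \<le> i" "2 * i \<le> n" using False l h2 by (auto simp: i_def M_def)
      have "stochastic k n (Cmat k n i)" using i by (intro Cmat_stoch) auto
      then show ?thesis unfolding fam_stack XfC[OF False] vfC[OF False] i_def[symmetric]
      proof (intro stack_Gamma_pi)
        show "\<forall>j<n. dvec n i (n - 1 - j) = dvec n i j" using i dvec_sym[of i n] by auto
      qed (use i in \<open>auto simp: dvec_nn dvec_sum\<close>)
    qed
  qed
  have indep: "lin_indep M (new_family k n B)"
    unfolding lin_indep_def
  proof (rule allI, rule impI)
    fix c assume c0: "lincomb M c (new_family k n B) = (\<lambda>i j. 0)"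
    have S0: "stack k n (lincomb M c (Xf k n B)) (\<lambda>j. \<Sum>l<M. c l * vf k n l j)
        (flip k n (lincomb M c (Xf k n B))) = (\<lambda>i j. 0)"
      using c0 unfolding famF lincomb_stack .
    have cC: "c l = 0" if "N \<le> l" "l < M" for l
    proof -
      define j where "j = l - N"
      have jh: "j < h - 1" "j < n" using that h2 by (auto simp: j_def M_def)
      have "0 = (\<Sum>l<M. c l * vf k n l j)" using stack_zero_mid[OF S0 jh(2)] by simp
      also have "\<dots> = (\<Sum>l<N. c l * vf k n l j) + (\<Sum>l\<in>{N..<M}. c l * vf k n l j)"
        by (rule split_sum[OF NM])
      also have "(\<Sum>l<N. c l * vf k n l j) = 0"
        using midv_zero[OF n, of j] jh by (simp add: vfB h_def)
      also have "(\<Sum>l\<in>{N..<M}. c l * vf k n l j) = (\<Sum>l\<in>{N..<N+(half_up n - 1)}. c l * dvec n (l-N+1) j)"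
        by (intro sum.cong) (auto simp: vfC M_def h_def)
      also have "\<dots> = c l / 2" using dfam[OF n jh(2), where N=N and c=c] jh that
        by (simp add: h_def j_def)
      finally show ?thesis by simp
    qed
    have "lincomb N c B = (\<lambda>i j. 0)"
    proof (intro ext)
      fix r j
      show "lincomb N c B r j = 0"
      proof (cases "r < k \<and> j < n")
        case True
        have "0 = lincomb M c (Xf k n B) r j" using stack_zero_top[OF S0] True by simp
        also have "\<dots> = (\<Sum>l<N. c l * Xf k n B l r j) + (\<Sum>l\<in>{N..<M}. c l * Xf k n B l r j)"
          unfolding lincomb_def by (rule split_sum[OF NM])
        also have "(\<Sum>l\<in>{N..<M}. c l * Xf k n B l r j) = 0"
          using cC by (intro sum.neutral) auto
        also have "(\<Sum>l<N. c l * Xf k n B l r j) = lincomb N c B r j"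
          unfolding lincomb_def by (intro sum.cong) (auto simp: XfB)
        finally show ?thesis by simp
      next
        case False
        have "B l r j = 0" if "l < N" for l
          using Bm that False by (auto simp: Gamma_def stochastic_def is_mat_def)
        then show ?thesis unfolding lincomb_def by (intro sum.neutral) auto
      qed
    qed
    then have cB: "\<forall>l<N. c l = 0" using Bi by (auto simp: lin_indep_def)
    show "\<forall>l<M. c l = 0"
      using cB cC by (metis not_le)
  qed
  have span: "\<forall>A\<in>Gamma_pi (2*k+1) n. \<exists>c. A = lincomb M c (new_family k n B)"
  proof
    fix A assume A: "A \<in> Gamma_pi (2*k+1) n"
    have Am: "is_mat (2*k+1) n A" and Ap: "\<forall>i<2*k+1. \<forall>j<n. 0 \<le> A i j"
      and As: "\<forall>i<2*k+1. (\<Sum>j<n. A i j) = 1" and Af: "flip (2*k+1) n A = A"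
      using A by (auto simp: Gamma_pi_def stochastic_def)
    define X where "X = (\<lambda>r j. if r < k \<and> j < n then A r j else 0)"
    define v where "v = (\<lambda>j. if j < n then A k j else 0)"
    have Aeq: "A = stack k n X v (flip k n X)"
    proof (intro ext)
      fix r j
      show "A r j = stack k n X v (flip k n X) r j"
      proof (cases "r < 2*k+1 \<and> j < n")
        case False then show ?thesis using Am by (auto simp: is_mat_def stack_def)
      next
        case True
        have "A r j = flip (2*k+1) n A r j" using Af by simp
        then show ?thesis using True by (auto simp: stack_def flip_def X_def v_def mult_2)
      qed
    qed
    have vsym: "\<forall>j<n. v (n-1-j) = v j"
    proof (intro allI impI)
      fix j assume j: "j < n"
      have "A k j = flip (2*k+1) n A k j" using Af by simp
      then show "v (n-1-j) = v j" using j by (simp add: flip_def v_def)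
    qed
    have vsum: "(\<Sum>j<n. v j) = 1" using As by (simp add: v_def)
    define cC where "cC = (\<lambda>l. 2 * v (l - N))"
    define s where "s = 1 - (\<Sum>l\<in>{N..<M}. cC l)"
    define Y where "Y = (\<lambda>r j. X r j - (\<Sum>l\<in>{N..<M}. cC l * Cmat k n (l-N+1) r j))"
    have Ym: "is_mat k n Y" by (auto simp: is_mat_def Y_def X_def Cmat_def)
    have Yr: "\<forall>r<k. (\<Sum>j<n. Y r j) = s"
    proof (intro allI impI)
      fix r assume r: "r < k"
      have "(\<Sum>j<n. Y r j) = (\<Sum>j<n. X r j) - (\<Sum>l\<in>{N..<M}. cC l * (\<Sum>j<n. Cmat k n (l-N+1) r j))"
        by (simp add: Y_def sum_subtractf sum_distrib_left sum.swap[of _ "{..<n}"])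
      also have "(\<Sum>j<n. X r j) = 1" using As r by (simp add: X_def)
      also have "(\<Sum>l\<in>{N..<M}. cC l * (\<Sum>j<n. Cmat k n (l-N+1) r j)) = (\<Sum>l\<in>{N..<M}. cC l)"
      proof (intro sum.cong refl)
        fix l assume l: "l \<in> {N..<M}"
        have "stochastic k n (Cmat k n (l-N+1))" using l h2 by (intro Cmat_stoch) (auto simp: M_def)
        then show "cC l * (\<Sum>j<n. Cmat k n (l-N+1) r j) = cC l" using r by (simp add: stochastic_def)
      qed
      finally show "(\<Sum>j<n. Y r j) = s" by (simp add: s_def)
    qed
    obtain cB where cB: "Y = lincomb N cB B" "(\<Sum>l<N. cB l) = s"
      using span_rows[OF k n Bs Bm Ym Yr] by blast
    define c where "c = (\<lambda>l. if l < N then cB l else cC l)"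
    have top: "lincomb M c (Xf k n B) = X"
    proof (intro ext)
      fix r j
      have "lincomb M c (Xf k n B) r j = (\<Sum>l<N. c l * Xf k n B l r j) + (\<Sum>l\<in>{N..<M}. c l * Xf k n B l r j)"
        unfolding lincomb_def by (rule split_sum[OF NM])
      also have "(\<Sum>l<N. c l * Xf k n B l r j) = Y r j"
        unfolding cB lincomb_def by (intro sum.cong) (auto simp: c_def XfB)
      also have "(\<Sum>l\<in>{N..<M}. c l * Xf k n B l r j) = (\<Sum>l\<in>{N..<M}. cC l * Cmat k n (l-N+1) r j)"
        by (intro sum.cong) (auto simp: c_def XfC)
      finally show "lincomb M c (Xf k n B) r j = X r j" by (simp add: Y_def)
    qed
    have mid: "(\<lambda>j. \<Sum>l<M. c l * vf k n l j) = v"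
    proof (intro ext)
      fix j
      have "(\<Sum>l<M. c l * vf k n l j) = (\<Sum>l<N. c l * vf k n l j) + (\<Sum>l\<in>{N..<M}. c l * vf k n l j)"
        by (rule split_sum[OF NM])
      also have "(\<Sum>l<N. c l * vf k n l j) = s * midv n j"
      proof -
        have "(\<Sum>l<N. c l * vf k n l j) = (\<Sum>l<N. cB l * midv n j)"
          by (intro sum.cong) (auto simp: c_def vfB)
        also have "\<dots> = (\<Sum>l<N. cB l) * midv n j" by (rule sum_distrib_right[symmetric])
        finally show ?thesis using cB(2) by simp
      qed
      also have "(\<Sum>l\<in>{N..<M}. c l * vf k n l j) = (\<Sum>l\<in>{N..<N+(half_up n - 1)}. cC l * dvec n (l-N+1) j)"
        by (intro sum.cong) (auto simp: c_def vfC M_def h_def)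
      finally have e: "(\<Sum>l<M. c l * vf k n l j) = s * midv n j + (\<Sum>l\<in>{N..<N+(half_up n - 1)}. cC l * dvec n (l-N+1) j)" .
      show "(\<Sum>l<M. c l * vf k n l j) = v j"
      proof (cases "j < n")
        case False
        have "midv n j = 0" "v j = 0" using False by (simp_all add: midv_def dvec_def evec_def v_def)
        moreover have "(\<Sum>l\<in>{N..<N+(half_up n - 1)}. cC l * dvec n (l-N+1) j) = 0"
          by (intro sum.neutral) (simp add: dvec_def False)
        ultimately show ?thesis using e by simp
      next
        case True
        note d = dfam[OF n True, where N=N and c=cC]
        consider "j < h - 1" | "n - h < j" | "h - 1 \<le> j" "j \<le> n - h" by linarith
        then show ?thesis
        proof cases
          case 1
          have c1: "(j < half_up n - 1) = True" using 1 by (simp add: h_def)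
          have X0: "(\<Sum>l\<in>{N..<N+(half_up n - 1)}. cC l * dvec n (l-N+1) j) = cC (N + j) / 2"
            using d unfolding c1 if_True .
          have m0: "midv n j = 0" using midv_zero[OF n, of j] 1 by (simp add: h_def)
          have cv: "cC (N + j) / 2 = v j" by (simp add: cC_def)
          show ?thesis unfolding e X0 m0 cv by simp
        next
          case 2
          have c1: "(j < half_up n - 1) = False" "(n - half_up n < j) = True"
            using 2 h2 by (auto simp: h_def)
          have X0: "(\<Sum>l\<in>{N..<N+(half_up n - 1)}. cC l * dvec n (l-N+1) j) = cC (N + (n-1-j)) / 2"
            using d unfolding c1 if_True if_False .
          have m0: "midv n j = 0" using midv_zero[OF n, of j] 2 by (simp add: h_def)
          have cv: "cC (N + (n-1-j)) / 2 = v j" using vsym True by (simp add: cC_def)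
          show ?thesis unfolding e X0 m0 cv by simp
        next
          case 3
          have c1: "(j < half_up n - 1) = False" "(n - half_up n < j) = False"
            using 3 h2 by (auto simp: h_def)
          have X0: "(\<Sum>l\<in>{N..<N+(half_up n - 1)}. cC l * dvec n (l-N+1) j) = 0"
            using d unfolding c1 if_True if_False .
          have "(\<Sum>l\<in>{N..<M}. cC l) = (\<Sum>i\<in>{0..<h-1}. 2 * v i)"
            unfolding M_def sum.atLeastLessThan_shift_0[of _ N] by (simp add: cC_def)
          then have sv: "s = 1 - (\<Sum>i\<in>{0..<half_up n - 1}. 2 * v i)" by (simp add: s_def h_def)
          have vj: "v j = (1 - (\<Sum>i\<in>{0..<half_up n - 1}. 2 * v i)) * midv n j"
            using mid_decomp[OF n vsym vsum True] 3 by (simp add: h_def)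
          show ?thesis unfolding e X0 sv vj by simp
        qed
      qed
    qed
    have "lincomb M c (new_family k n B) = A"
      unfolding famF lincomb_stack top mid using Aeq by simp
    then show "\<exists>c. A = lincomb M c (new_family k n B)" by metis
  qed
  show ?thesis using mem indep span
    by (simp add: is_basis_def M_def N_def h_def)
qed

end
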